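(* Let $(X,d)$ be a metric space, $\mu$ a non-atomic Borel measure on $X$, $m$ a Borel measure on $X$ and $0<p<\infty$. If $f:X\to\mathbb R$ is $ACC_p$ and $f=0$ $m$-almost everywhere, then the family $\Gamma=\{\gamma\in\Gamma^\mu: f\circ\gamma\not\equiv0\}$ has $\mathrm{Mod}_p(\Gamma)=0$.
   Context: A path is a continuous map $\gamma:[a,b]\to X$; a subpath is a restriction to a subinterval, trivial if that interval is a point; $\mathrm{Im}(\gamma)=\gamma([a,b])$. $\mu$ non-atomic: $\mu(\{x\})=0$ for all $x$. $\Gamma^\mu$ is the set of all non-trivial injective paths $\gamma$ with $0<\mu(\mathrm{Im}(\tilde\gamma))<\infty$ for every non-trivial subpath $\tilde\gamma$. For Borel $g\ge0$, $\int_\gamma g:=\int_{\mathrm{Im}(\gamma)}g\,d\mu$. For $\gamma:[a,b]\to X$ in $\Gamma^\mu$, $h(\gamma)=\mu(\mathrm{Im}(\gamma))$, $\nu_\gamma(x)=\mu(\gamma([a,x]))$ (a bijection $[a,b]\to[0,h(\gamma)]$) and $\gamma_h=\gamma\circ\nu_\gamma^{-1}$. For $\Gamma\subset\Gamma^\mu$, $\mathrm{Mod}_p(\Gamma)=\inf\int_Xg^p\,dm$ over Borel $g\ge0$ with $\int_\gamma g\ge1$ for all $\gamma\in\Gamma$. $f$ is $ACC_p$ if $f\circ\gamma_h$ is absolutely continuous on $[0,h(\gamma)]$ for all $\gamma\in\Gamma^\mu$ outside a family of $p$-modulus zero. *)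

theory Defs
  imports "HOL-Analysis.Analysis"
begin

text \<open>A path is represented as a triple (a, b, gamma) standing for gamma restricted to [a,b].\<close>
type_synonym 'a rpath = "real \<times> real \<times> (real \<Rightarrow> 'a)"

definition pimage :: "'a rpath \<Rightarrow> 'a set" where
  "pimage P = (case P of (a, b, g) \<Rightarrow> g ` {a..b})"

definition Gamma_mu :: "'a::metric_space measure \<Rightarrow> 'a rpath set" where
  "Gamma_mu mu = {(a, b, g). a < b \<and> continuous_on {a..b} g \<and> inj_on g {a..b} \<and>
     (\<forall>c d. a \<le> c \<and> c < d \<and> d \<le> b \<longrightarrow>
        0 < emeasure mu (g ` {c..d}) \<and> emeasure mu (g ` {c..d}) < \<infinity>)}"

definition enn_powr :: "ennreal \<Rightarrow> real \<Rightarrow> ennreal" where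
  "enn_powr x p = (if x = \<infinity> then \<infinity> else ennreal (enn2real x powr p))"

definition Mod :: "real \<Rightarrow> 'a::metric_space measure \<Rightarrow> 'a measure \<Rightarrow> 'a rpath set \<Rightarrow> ennreal" where
  "Mod p mu m \<Gamma> = (INF g \<in> {g :: 'a \<Rightarrow> ennreal. g \<in> borel_measurable borel \<and>
        (\<forall>P\<in>\<Gamma>. (\<integral>\<^sup>+ x \<in> pimage P. g x \<partial>mu) \<ge> 1)}.
      \<integral>\<^sup>+ x. enn_powr (g x) p \<partial>m)"

definition hlen :: "'a measure \<Rightarrow> 'a rpath \<Rightarrow> real" where
  "hlen mu P = measure mu (pimage P)"

definition nu :: "'a measure \<Rightarrow> 'a rpath \<Rightarrow> real \<Rightarrow> real" where
  "nu mu P = (case P of (a, b, g) \<Rightarrow> (\<lambda>x. measure mu (g ` {a..x})))"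

definition gamma_h :: "'a measure \<Rightarrow> 'a rpath \<Rightarrow> real \<Rightarrow> 'a" where
  "gamma_h mu P = (case P of (a, b, g) \<Rightarrow> g \<circ> inv_into {a..b} (nu mu P))"

definition abs_cont_on :: "real set \<Rightarrow> (real \<Rightarrow> real) \<Rightarrow> bool" where
  "abs_cont_on S f \<longleftrightarrow> (\<forall>e>0. \<exists>d>0. \<forall>n::nat. \<forall>u v :: nat \<Rightarrow> real.
      (\<forall>i<n. u i \<le> v i \<and> {u i..v i} \<subseteq> S) \<and>
      disjoint_family_on (\<lambda>i. {u i<..<v i}) {..<n} \<and>
      (\<Sum>i<n. v i - u i) < d \<longrightarrow> (\<Sum>i<n. \<bar>f (v i) - f (u i)\<bar>) < e)"

definition ACC :: "real \<Rightarrow> 'a::metric_space measure \<Rightarrow> 'a measure \<Rightarrow> ('a \<Rightarrow> real) \<Rightarrow> bool" where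
  "ACC p mu m f \<longleftrightarrow> (\<exists>\<Gamma>0 \<subseteq> Gamma_mu mu. Mod p mu m \<Gamma>0 = 0 \<and>
     (\<forall>P \<in> Gamma_mu mu - \<Gamma>0. abs_cont_on {0..hlen mu P} (f \<circ> gamma_h mu P)))"

end

theory Submission
  imports Defs
begin

lemma GM_D:
  assumes "(a, b, g) \<in> Gamma_mu mu"
  shows "a < b" "continuous_on {a..b} g" "inj_on g {a..b}"
    "\<And>c d. a \<le> c \<Longrightarrow> c < d \<Longrightarrow> d \<le> b \<Longrightarrow> 0 < emeasure mu (g ` {c..d}) \<and> emeasure mu (g ` {c..d}) < \<infinity>"
proof -
  have H: "a < b \<and> continuous_on {a..b} g \<and> inj_on g {a..b} \<and>
     (\<forall>c d. a \<le> c \<and> c < d \<and> d \<le> b \<longrightarrow>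
        0 < emeasure mu (g ` {c..d}) \<and> emeasure mu (g ` {c..d}) < \<infinity>)"
    using assms unfolding Gamma_mu_def by simp
  from H show "a < b" by (rule conjunct1)
  from H show "continuous_on {a..b} g" by (elim conjE)
  from H show "inj_on g {a..b}" by (elim conjE)
  from H have H4: "\<forall>c d. a \<le> c \<and> c < d \<and> d \<le> b \<longrightarrow>
        0 < emeasure mu (g ` {c..d}) \<and> emeasure mu (g ` {c..d}) < \<infinity>" by (elim conjE)
  show "0 < emeasure mu (g ` {c..d}) \<and> emeasure mu (g ` {c..d}) < \<infinity>"
    if "a \<le> c" "c < d" "d \<le> b" for c d
    using H4[rule_format, OF conjI[OF that(1) conjI[OF that(2) that(3)]]] .
qed

lemma img_sets:
  fixes a b c d :: real and g :: "real \<Rightarrow> 'a::metric_space"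
  assumes "sets mu = sets borel" "continuous_on {a..b} g" "a \<le> c" "d \<le> b"
  shows "g ` {c..d} \<in> sets mu"
proof -
  have "continuous_on {c..d} g" using assms continuous_on_subset by fastforce
  hence "compact (g ` {c..d})" by (intro compact_continuous_image) auto
  hence "closed (g ` {c..d})" by (rule compact_imp_closed)
  thus ?thesis using assms(1) borel_closed by auto
qed

lemma img_fin:
  assumes "\<forall>x. emeasure mu {x} = 0" "(a, b, g) \<in> Gamma_mu mu" "a \<le> c" "c \<le> d" "d \<le> b"
  shows "emeasure mu (g ` {c..d}) < \<infinity>"
proof (cases "c = d")
  case True thus ?thesis using assms(1) by simp
next
  case False thus ?thesis using GM_D(4)[OF assms(2), of c d] assms by auto
qed

lemma img_add:
  assumes "sets mu = sets borel" "\<forall>x. emeasure mu {x} = 0" "(a, b, g) \<in> Gamma_mu mu"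
    "a \<le> x" "x \<le> y" "y \<le> b"
  shows "emeasure mu (g ` {a..y}) = emeasure mu (g ` {a..x}) + emeasure mu (g ` {x..y})"
proof -
  note D = GM_D[OF assms(3)]
  have U: "g ` {a..y} = g ` {a..x} \<union> g ` {x..y}" proof -
    have "{a..y} = {a..x} \<union> {x..y}" using assms by auto
    thus ?thesis by (simp add: image_Un)
  qed
  have I: "g ` {a..x} \<inter> g ` {x..y} \<subseteq> {g x}"
  proof
    fix z assume "z \<in> g ` {a..x} \<inter> g ` {x..y}"
    then obtain u v where uv: "u \<in> {a..x}" "v \<in> {x..y}" "z = g u" "z = g v" by auto
    hence "u = v" using D(3) assms unfolding inj_on_def by (metis atLeastAtMost_iff order_trans)
    thus "z \<in> {g x}" using uv by auto
  qed
  have s1: "g ` {a..x} \<in> sets mu" and s2: "g ` {x..y} \<in> sets mu"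
    using img_sets[OF assms(1) D(2)] assms by auto
  have "{g x} \<in> null_sets mu" using assms(1,2) by (simp add: null_sets_def)
  hence "g ` {a..x} \<inter> g ` {x..y} \<in> null_sets mu"
    using I s1 s2 by (meson null_sets_subset sets.Int)
  thus ?thesis unfolding U by (rule emeasure_Un'[OF s1 s2])
qed


lemma shrink:
  assumes "sets mu = sets borel" "\<forall>x. emeasure mu {x} = 0" "(a, b, g) \<in> Gamma_mu mu"
    and I: "decseq I" "\<And>n. \<exists>c d. I n = {c..d} \<and> a \<le> c \<and> c \<le> d \<and> d \<le> b"
    and int: "(\<Inter>n. I n) = {t}" and "0 < \<delta>"
  shows "\<exists>n. emeasure mu (g ` I n) < ennreal \<delta>"
proof -
  note D = GM_D[OF assms(3)]
  have sub: "\<And>n. I n \<subseteq> {a..b}"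
  proof -
    fix n obtain c d where "I n = {c..d}" "a \<le> c" "c \<le> d" "d \<le> b" using I(2)[of n] by blast
    thus "I n \<subseteq> {a..b}" by auto
  qed
  have sets: "\<And>n. g ` I n \<in> sets mu" using I(2) img_sets[OF assms(1) D(2)] by metis
  have fin: "\<And>n. emeasure mu (g ` I n) \<noteq> \<infinity>" using I(2) img_fin[OF assms(2,3)]
    by (metis less_irrefl)
  have dec: "decseq (\<lambda>n. g ` I n)" using I(1) unfolding decseq_def by (simp add: image_mono)
  have "(INF n. emeasure mu (g ` I n)) = emeasure mu (\<Inter>n. g ` I n)"
    by (rule INF_emeasure_decseq) (use sets dec fin in auto)
  also have "(\<Inter>n. g ` I n) = g ` (\<Inter>n. I n)"
    by (rule image_INT[symmetric, OF D(3)]) (use sub in auto)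
  also have "\<dots> = {g t}" using int by simp
  also have "emeasure mu {g t} = 0" using assms(2) by simp
  finally have "(INF n. emeasure mu (g ` I n)) < ennreal \<delta>" using assms by simp
  thus ?thesis by (simp add: INF_less_iff)
qed

lemma small_right:
  assumes "sets mu = sets borel" "\<forall>x. emeasure mu {x} = 0" "(a, b, g) \<in> Gamma_mu mu"
    and "a \<le> t" "t < b" "0 < \<delta>"
  shows "\<exists>x. t < x \<and> x \<le> b \<and> emeasure mu (g ` {t..x}) < ennreal \<delta>"
proof -
  define I where "I n = {t..t + (b - t) / Suc n}" for n :: nat
  have dec: "decseq I" unfolding decseq_def I_def
  proof (intro allI impI)
    fix m n :: nat assume "m \<le> n"
    hence "(b - t) / Suc n \<le> (b - t) / Suc m" using assms by (simp add: frac_le)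
    thus "{t..t + (b - t) / Suc n} \<subseteq> {t..t + (b - t) / Suc m}" by auto
  qed
  have iv: "\<And>n. \<exists>c d. I n = {c..d} \<and> a \<le> c \<and> c \<le> d \<and> d \<le> b"
  proof -
    fix n
    have "(b - t) / Suc n \<le> b - t" using assms by (simp add: divide_le_eq)
    moreover have "0 \<le> (b - t) / Suc n" using assms by simp
    ultimately show "\<exists>c d. I n = {c..d} \<and> a \<le> c \<and> c \<le> d \<and> d \<le> b"
      unfolding I_def using assms by (intro exI[of _ t] exI[of _ "t + (b - t) / Suc n"]) auto
  qed
  have int: "(\<Inter>n. I n) = {t}"
  proof
    show "{t} \<subseteq> (\<Inter>n. I n)" unfolding I_def using assms by auto
    show "(\<Inter>n. I n) \<subseteq> {t}"
    proof
      fix y assume y: "y \<in> (\<Inter>n. I n)"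
      hence ty: "t \<le> y" unfolding I_def by auto
      have "\<not> t < y"
      proof
        assume "t < y"
        then obtain n where n: "n > 0" "inverse (of_nat n) < (y - t) / (b - t)"
          using ex_inverse_of_nat_less[of "(y - t) / (b - t)"] assms by auto
        have "(b - t) / Suc n < (b - t) / n" using n assms by (simp add: frac_less2)
        also have "\<dots> < y - t" using n assms by (simp add: field_simps)
        finally have "y \<notin> I n" unfolding I_def by auto
        thus False using y by auto
      qed
      thus "y \<in> {t}" using ty by auto
    qed
  qed
  obtain n where n: "emeasure mu (g ` I n) < ennreal \<delta>"
    using shrink[OF assms(1,2,3) dec iv int assms(6)] by auto
  have "(b - t) / Suc n \<le> b - t" using assms by (simp add: divide_le_eq)
  moreover have "0 < (b - t) / Suc n" using assms by simp
  ultimately show ?thesis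
    using n unfolding I_def by (intro exI[of _ "t + (b - t) / Suc n"]) simp
qed

lemma small_left:
  assumes "sets mu = sets borel" "\<forall>x. emeasure mu {x} = 0" "(a, b, g) \<in> Gamma_mu mu"
    and "a < t" "t \<le> b" "0 < \<delta>"
  shows "\<exists>x. a \<le> x \<and> x < t \<and> emeasure mu (g ` {x..t}) < ennreal \<delta>"
proof -
  define I where "I n = {t - (t - a) / Suc n..t}" for n :: nat
  have dec: "decseq I" unfolding decseq_def I_def
  proof (intro allI impI)
    fix m n :: nat assume "m \<le> n"
    hence "(t - a) / Suc n \<le> (t - a) / Suc m" using assms by (simp add: frac_le)
    thus "{t - (t - a) / Suc n..t} \<subseteq> {t - (t - a) / Suc m..t}" by auto
  qed
  have iv: "\<And>n. \<exists>c d. I n = {c..d} \<and> a \<le> c \<and> c \<le> d \<and> d \<le> b"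
  proof -
    fix n
    have "(t - a) / Suc n \<le> t - a" using assms by (simp add: divide_le_eq)
    moreover have "0 \<le> (t - a) / Suc n" using assms by simp
    ultimately show "\<exists>c d. I n = {c..d} \<and> a \<le> c \<and> c \<le> d \<and> d \<le> b"
      unfolding I_def using assms by (intro exI[of _ "t - (t - a) / Suc n"] exI[of _ t]) auto
  qed
  have int: "(\<Inter>n. I n) = {t}"
  proof
    show "{t} \<subseteq> (\<Inter>n. I n)" unfolding I_def using assms by auto
    show "(\<Inter>n. I n) \<subseteq> {t}"
    proof
      fix y assume y: "y \<in> (\<Inter>n. I n)"
      hence ty: "y \<le> t" unfolding I_def by auto
      have "\<not> y < t"
      proof
        assume "y < t"
        then obtain n where n: "n > 0" "inverse (of_nat n) < (t - y) / (t - a)"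
          using ex_inverse_of_nat_less[of "(t - y) / (t - a)"] assms by auto
        have "(t - a) / Suc n < (t - a) / n" using n assms by (simp add: frac_less2)
        also have "\<dots> < t - y" using n assms by (simp add: field_simps)
        finally have "y \<notin> I n" unfolding I_def by auto
        thus False using y by auto
      qed
      thus "y \<in> {t}" using ty by auto
    qed
  qed
  obtain n where n: "emeasure mu (g ` I n) < ennreal \<delta>"
    using shrink[OF assms(1,2,3) dec iv int assms(6)] by auto
  have "(t - a) / Suc n \<le> t - a" using assms by (simp add: divide_le_eq)
  moreover have "0 < (t - a) / Suc n" using assms by simp
  ultimately show ?thesis
    using n unfolding I_def by (intro exI[of _ "t - (t - a) / Suc n"]) simp
qed


lemma key:
  assumes mu: "sets mu = sets borel" "\<forall>x. emeasure mu {x} = 0" and P: "(a, b, g) \<in> Gamma_mu mu"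
    and ac: "abs_cont_on {0..hlen mu (a, b, g)} (f \<circ> gamma_h mu (a, b, g))"
    and t: "a \<le> t" "t \<le> b" "f (g t) \<noteq> 0"
  shows "\<exists>c d. a \<le> c \<and> c < d \<and> d \<le> b \<and> (\<forall>x\<in>{c..d}. f (g x) \<noteq> 0)"
proof -
  note D = GM_D[OF P]
  define \<nu> where "\<nu> x = measure mu (g ` {a..x})" for x
  define F where "F = f \<circ> gamma_h mu (a, b, g)"
  have fin: "emeasure mu (g ` {c..d}) < top" if "a \<le> c" "c \<le> d" "d \<le> b" for c d
    using img_fin[OF mu(2) P that] by simp
  have add: "\<nu> y = \<nu> x + measure mu (g ` {x..y})" if "a \<le> x" "x \<le> y" "y \<le> b" for x y
    unfolding \<nu>_def measure_def using img_add[OF mu P that] fin that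
    by (simp add: enn2real_plus)
  have pos: "0 < measure mu (g ` {x..y})" if "a \<le> x" "x < y" "y \<le> b" for x y
    using D(4)[OF that] unfolding measure_def by (simp add: enn2real_positive_iff)
  have mono: "\<nu> x \<le> \<nu> y" if "a \<le> x" "x \<le> y" "y \<le> b" for x y
    using add[OF that] by simp
  have smono: "\<nu> x < \<nu> y" if "a \<le> x" "x < y" "y \<le> b" for x y
    using add[of x y] pos[OF that] that by simp
  have inj: "inj_on \<nu> {a..b}"
  proof (rule inj_onI)
    fix x y assume xy: "x \<in> {a..b}" "y \<in> {a..b}" "\<nu> x = \<nu> y"
    show "x = y"
    proof (rule ccontr)
      assume "x \<noteq> y"
      hence "x < y \<or> y < x" by auto
      hence "\<nu> x < \<nu> y \<or> \<nu> y < \<nu> x" using smono[of x y] smono[of y x] xy(1,2) by auto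
      thus False using xy(3) by simp
    qed
  qed
  have nueq: "nu mu (a, b, g) = \<nu>" unfolding nu_def \<nu>_def by auto
  have hl: "hlen mu (a, b, g) = \<nu> b" unfolding hlen_def pimage_def \<nu>_def by simp
  have Fval: "F (\<nu> x) = f (g x)" if "x \<in> {a..b}" for x
    unfolding F_def gamma_h_def nueq using inv_into_f_f[OF inj that] by simp
  have rng: "\<nu> x \<in> {0..\<nu> b}" if "x \<in> {a..b}" for x
    using mono[of x b] that unfolding \<nu>_def by auto
  have e: "0 < \<bar>f (g t)\<bar>" using t by simp
  obtain \<delta> where \<delta>: "\<delta> > 0" and
    dd: "\<And>u v. u \<in> {0..\<nu> b} \<Longrightarrow> v \<in> {0..\<nu> b} \<Longrightarrow> u \<le> v \<Longrightarrow> v - u < \<delta> \<Longrightarrow> \<bar>F v - F u\<bar> < \<bar>f (g t)\<bar>"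
  proof -
    have ac': "abs_cont_on {0..\<nu> b} F" using ac unfolding hl F_def .
    from ac'[unfolded abs_cont_on_def, rule_format, OF e] obtain d where d: "d > 0" and H: "\<forall>n::nat. \<forall>u v :: nat \<Rightarrow> real.
      (\<forall>i<n. u i \<le> v i \<and> {u i..v i} \<subseteq> {0..\<nu> b}) \<and>
      disjoint_family_on (\<lambda>i. {u i<..<v i}) {..<n} \<and>
      (\<Sum>i<n. v i - u i) < d \<longrightarrow> (\<Sum>i<n. \<bar>F (v i) - F (u i)\<bar>) < \<bar>f (g t)\<bar>"
      by blast
    show ?thesis
    proof (rule that[OF d])
      fix u v assume uv: "u \<in> {0..\<nu> b}" "v \<in> {0..\<nu> b}" "u \<le> v" "v - u < d"
      define U :: "nat \<Rightarrow> real" where "U = (\<lambda>_. u)"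
      define V :: "nat \<Rightarrow> real" where "V = (\<lambda>_. v)"
      have c1: "\<forall>i<1. U i \<le> V i \<and> {U i..V i} \<subseteq> {0..\<nu> b}"
        using uv unfolding U_def V_def by auto
      have c2: "disjoint_family_on (\<lambda>i. {U i<..<V i}) {..<1}"
        unfolding disjoint_family_on_def by auto
      have c3: "(\<Sum>i<1. V i - U i) < d" using uv unfolding U_def V_def by simp
      have "(\<Sum>i<1. \<bar>F (V i) - F (U i)\<bar>) < \<bar>f (g t)\<bar>"
        using H[rule_format, OF conjI[OF c1 conjI[OF c2 c3]]] .
      thus "\<bar>F v - F u\<bar> < \<bar>f (g t)\<bar>" unfolding U_def V_def by simp
    qed
  qed
  have near: "f (g x) \<noteq> 0" if x: "x \<in> {a..b}" "\<bar>\<nu> x - \<nu> t\<bar> < \<delta>" for x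
  proof
    assume z: "f (g x) = 0"
    have tt: "t \<in> {a..b}" using t by auto
    show False
    proof (cases "\<nu> x \<le> \<nu> t")
      case True
      have "\<bar>F (\<nu> t) - F (\<nu> x)\<bar> < \<bar>f (g t)\<bar>" using dd[OF rng[OF x(1)] rng[OF tt] True] x by simp
      thus False using Fval[OF x(1)] Fval[OF tt] z by simp
    next
      case False
      have "\<bar>F (\<nu> x) - F (\<nu> t)\<bar> < \<bar>f (g t)\<bar>" using dd[OF rng[OF tt] rng[OF x(1)]] False x by simp
      thus False using Fval[OF x(1)] Fval[OF tt] z by simp
    qed
  qed
  show ?thesis
  proof (cases "t < b")
    case True
    obtain x where x: "t < x" "x \<le> b" "emeasure mu (g ` {t..x}) < ennreal \<delta>"
      using small_right[OF mu P t(1) True \<delta>] by blast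
    have m: "measure mu (g ` {t..x}) < \<delta>"
      unfolding measure_def using x fin[of t x] t \<delta> by simp
    show ?thesis
    proof (intro exI conjI ballI)
      show "a \<le> t" "t < x" "x \<le> b" by fact+
      fix y assume y: "y \<in> {t..x}"
      have "\<nu> y - \<nu> t \<le> \<nu> x - \<nu> t" using mono[of y x] y x t by auto
      also have "\<dots> = measure mu (g ` {t..x})" using add[of t x] x t by simp
      finally have "\<bar>\<nu> y - \<nu> t\<bar> < \<delta>" using m mono[of t y] y x t by auto
      thus "f (g y) \<noteq> 0" using near y x t by auto
    qed
  next
    case False
    hence tb: "t = b" using t by simp
    hence at: "a < t" using D(1) by simp
    obtain x where x: "a \<le> x" "x < t" "emeasure mu (g ` {x..t}) < ennreal \<delta>"
      using small_left[OF mu P at t(2) \<delta>] by blast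
    have m: "measure mu (g ` {x..t}) < \<delta>"
      unfolding measure_def using x fin[of x t] t \<delta> by simp
    show ?thesis
    proof (intro exI conjI ballI)
      show "a \<le> x" "x < t" "t \<le> b" by fact+
      fix y assume y: "y \<in> {x..t}"
      have "\<nu> t - \<nu> y \<le> \<nu> t - \<nu> x" using mono[of x y] y x t by auto
      also have "\<dots> = measure mu (g ` {x..t})" using add[of x t] x t by simp
      finally have "\<bar>\<nu> y - \<nu> t\<bar> < \<delta>" using m mono[of y t] y x t by auto
      thus "f (g y) \<noteq> 0" using near y x t by auto
    qed
  qed
qed


theorem lemma3p7:
  fixes mu m :: "'a::metric_space measure" and p :: real and f :: "'a \<Rightarrow> real"
  assumes "sets mu = sets borel" and "\<forall>x. emeasure mu {x} = 0"
    and "sets m = sets borel"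
    and "0 < p"
    and "ACC p mu m f"
    and "AE x in m. f x = 0"
  shows "Mod p mu m {P \<in> Gamma_mu mu. \<exists>t \<in> {fst P..fst (snd P)}. f (snd (snd P) t) \<noteq> 0} = 0"
proof -
  obtain \<Gamma>0 where G0: "\<Gamma>0 \<subseteq> Gamma_mu mu" "Mod p mu m \<Gamma>0 = 0"
    and AC: "\<forall>P\<in>Gamma_mu mu - \<Gamma>0. abs_cont_on {0..hlen mu P} (f \<circ> gamma_h mu P)"
    using assms(5) unfolding ACC_def by blast
  obtain N where N: "{x \<in> space m. \<not> f x = 0} \<subseteq> N" "emeasure m N = 0" "N \<in> sets m"
    using assms(6) by (rule AE_E)
  have sp: "space m = UNIV" using sets_eq_imp_space_eq[OF assms(3)] by simp
  have NB: "N \<in> sets borel" using N(3) assms(3) by simp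
  have fN: "x \<in> N" if "f x \<noteq> 0" for x using N(1) sp that by auto
  have ae: "AE x in m. x \<notin> N" by (rule AE_not_in) (simp add: null_sets_def N)
  define \<Gamma> where "\<Gamma> = {P \<in> Gamma_mu mu. \<exists>t \<in> {fst P..fst (snd P)}. f (snd (snd P) t) \<noteq> 0}"
  have "Mod p mu m \<Gamma> \<le> Mod p mu m \<Gamma>0"
    unfolding Mod_def
  proof (rule INF_mono)
    fix g0 assume g0: "g0 \<in> {g :: 'a \<Rightarrow> ennreal. g \<in> borel_measurable borel \<and>
        (\<forall>P\<in>\<Gamma>0. (\<integral>\<^sup>+ x \<in> pimage P. g x \<partial>mu) \<ge> 1)}"
    define g where "g x = (if x \<in> N then \<infinity> else g0 x)" for x
    have gm: "g \<in> borel_measurable borel" unfolding g_def using g0 NB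
      by (intro measurable_If_set) auto
    have adm: "\<forall>P\<in>\<Gamma>. (\<integral>\<^sup>+ x \<in> pimage P. g x \<partial>mu) \<ge> 1"
    proof
      fix P assume PG: "P \<in> \<Gamma>"
      obtain a b \<gamma> where Pe: "P = (a, b, \<gamma>)" by (cases P) auto
      show "(\<integral>\<^sup>+ x \<in> pimage P. g x \<partial>mu) \<ge> 1"
      proof (cases "P \<in> \<Gamma>0")
        case True
        have "1 \<le> (\<integral>\<^sup>+ x \<in> pimage P. g0 x \<partial>mu)" using g0 True by auto
        also have "\<dots> \<le> (\<integral>\<^sup>+ x \<in> pimage P. g x \<partial>mu)"
          by (rule nn_integral_mono) (simp add: g_def split: split_indicator)
        finally show ?thesis .
      next
        case False
        have PM: "(a, b, \<gamma>) \<in> Gamma_mu mu" and t: "\<exists>t\<in>{a..b}. f (\<gamma> t) \<noteq> 0"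
          using PG unfolding \<Gamma>_def Pe by auto
        then obtain t where t: "a \<le> t" "t \<le> b" "f (\<gamma> t) \<noteq> 0" by auto
        have ac: "abs_cont_on {0..hlen mu (a, b, \<gamma>)} (f \<circ> gamma_h mu (a, b, \<gamma>))"
          using AC PM False Pe by auto
        obtain c d where cd: "a \<le> c" "c < d" "d \<le> b" "\<forall>x\<in>{c..d}. f (\<gamma> x) \<noteq> 0"
          using key[OF assms(1,2) PM ac t] by blast
        have sub: "\<gamma> ` {c..d} \<subseteq> N" using cd fN by auto
        have sub2: "\<gamma> ` {c..d} \<subseteq> pimage P" unfolding Pe pimage_def using cd by auto
        have ms: "\<gamma> ` {c..d} \<in> sets mu" using img_sets[OF assms(1) GM_D(2)[OF PM]] cd by auto
        have p0: "0 < emeasure mu (\<gamma> ` {c..d})" using GM_D(4)[OF PM cd(1-3)] by blast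
        hence posm: "emeasure mu (\<gamma> ` {c..d}) \<noteq> 0" by simp
        have le: "(\<integral>\<^sup>+ x. \<infinity> * indicator (\<gamma> ` {c..d}) x \<partial>mu) \<le> (\<integral>\<^sup>+ x \<in> pimage P. g x \<partial>mu)"
          by (rule nn_integral_mono) (use sub sub2 in \<open>auto simp: g_def split: split_indicator\<close>)
        have eq: "(\<integral>\<^sup>+ x. \<infinity> * indicator (\<gamma> ` {c..d}) x \<partial>mu) = \<infinity>"
          using nn_integral_cmult_indicator[OF ms, of \<infinity>] posm by (simp add: ennreal_top_mult)
        have i: "\<infinity> \<le> (\<integral>\<^sup>+ x \<in> pimage P. g x \<partial>mu)" using le by (simp only: eq)
        show ?thesis by (rule order_trans[OF _ i]) simp
      qed
    qed
    have "AE x in m. enn_powr (g x) p = enn_powr (g0 x) p"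
      using ae by eventually_elim (simp add: g_def)
    hence "(\<integral>\<^sup>+ x. enn_powr (g x) p \<partial>m) = (\<integral>\<^sup>+ x. enn_powr (g0 x) p \<partial>m)"
      by (rule nn_integral_cong_AE)
    thus "\<exists>n\<in>{g :: 'a \<Rightarrow> ennreal. g \<in> borel_measurable borel \<and>
        (\<forall>P\<in>\<Gamma>. (\<integral>\<^sup>+ x \<in> pimage P. g x \<partial>mu) \<ge> 1)}.
        (\<integral>\<^sup>+ x. enn_powr (n x) p \<partial>m) \<le> (\<integral>\<^sup>+ x. enn_powr (g0 x) p \<partial>m)"
      using gm adm by (intro bexI[of _ g]) auto
  qed
  thus ?thesis using G0 unfolding \<Gamma>_def by simp
qed

end
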